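(* Let $\psi:[0,1]\to[0,1]$ be convex and increasing with $\psi(0)=0$, and let $C\ge e^{1/e}$. Let $x=(x_1,\dots,x_n)$ be a stochastic vector and $y=\max_i x_i$. Then \[ \sum_{j=1}^n\psi\Big(\frac{x_j}{C\prod_{k=1}^n(1-x_k)^{1-x_k}}\Big)\ \le\ \frac1y\,\psi\Big(\frac{y\,e^{1-y}}{C\,(1-y)^{1-y}}\Big). \]
   Context: A stochastic vector has nonnegative entries summing to $1$. Convention: $0^0=1$. *)

theory Defs
  imports "HOL-Analysis.Analysis"
begin

text \<open>Real power a^b for a \<ge> 0 with the convention 0^0 = 1 (Isabelle's powr has 0 powr 0 = 0).\<close>
definition pow0 :: "real \<Rightarrow> real \<Rightarrow> real" where
  "pow0 a b = (if a = 0 then (if b = 0 then 1 else 0) else a powr b)"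

end

theory Submission
  imports Defs
begin

lemma pow0_self: "a \<ge> 0 \<Longrightarrow> pow0 a a = exp (a * ln a)"
  by (auto simp: pow0_def powr_def)

lemma xlnx_ge: "0 \<le> (t::real) \<Longrightarrow> t \<le> 1 \<Longrightarrow> (1 - t) * ln (1 - t) \<ge> - t"
proof (cases "t = 1")
  case False
  assume h: "0 \<le> t" "t \<le> 1"
  hence p: "1 - t > 0" using False by (smt (verit))
  have "ln (1 / (1 - t)) \<le> 1 / (1 - t) - 1" using p by (intro ln_le_minus_one) auto
  hence "- ln (1 - t) \<le> 1 / (1 - t) - 1" using p by (simp add: ln_div)
  hence "(1 - t) * (- ln (1 - t)) \<le> (1 - t) * (1 / (1 - t) - 1)"
    using p by (intro mult_left_mono) auto
  also have "\<dots> = t" using p by (simp add: field_simps)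
  finally show ?thesis by simp
qed simp

lemma ulnu_ge: "0 \<le> (u::real) \<Longrightarrow> u * ln u \<ge> - 1 / exp 1"
proof (cases "u = 0")
  case False
  assume "0 \<le> u"
  hence p: "u > 0" using False by (smt (verit))
  have "ln (1 / (exp 1 * u)) \<le> 1 / (exp 1 * u) - 1" using p by (intro ln_le_minus_one) auto
  hence "- 1 - ln u \<le> 1 / (exp 1 * u) - 1" using p by (simp add: ln_div ln_mult)
  hence "- ln u \<le> 1 / (exp 1 * u)" by simp
  hence "u * (- ln u) \<le> u * (1 / (exp 1 * u))" using p by (intro mult_left_mono) auto
  also have "\<dots> = 1 / exp 1" using p by simp
  finally show ?thesis by simp
qed simp

theorem lemma5p7:
  fixes psi :: "real \<Rightarrow> real" and C :: real and n :: nat and x :: "nat \<Rightarrow> real" and y :: real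
  assumes psi_convex: "convex_on {0..1} psi"
    and psi_mono: "mono_on {0..1} psi"
    and psi_range: "psi ` {0..1} \<subseteq> {0..1}"
    and psi_zero: "psi 0 = 0"
    and C_ge: "C \<ge> exp (1 / exp 1)"
    and x_nonneg: "\<forall>i\<in>{1..n}. x i \<ge> 0"
    and x_sum: "(\<Sum>i=1..n. x i) = 1"
    and y_def: "y = Max (x ` {1..n})"
  shows "(\<Sum>j=1..n. psi (x j / (C * (\<Prod>k=1..n. pow0 (1 - x k) (1 - x k)))))
           \<le> (1 / y) * psi (y * exp (1 - y) / (C * pow0 (1 - y) (1 - y)))"
proof -
  have ne: "{1..n} \<noteq> {}" using x_sum by (cases n) auto
  have x_le1: "x k \<le> 1" if "k \<in> {1..n}" for k
  proof -
    have "x k \<le> (\<Sum>i=1..n. x i)"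
      by (rule member_le_sum) (use that x_nonneg in auto)
    thus ?thesis using x_sum by simp
  qed
  have xy: "x k \<le> y" if "k \<in> {1..n}" for k
    using that y_def by auto
  have "y \<in> x ` {1..n}" unfolding y_def using ne by (intro Max_in) auto
  then obtain m where m: "m \<in> {1..n}" "x m = y" by auto
  have y1: "y \<le> 1" using m x_le1 by auto
  have ypos: "y > 0"
  proof (rule ccontr)
    assume "\<not> y > 0"
    hence "\<forall>i\<in>{1..n}. x i \<le> 0" using xy by force
    hence "(\<Sum>i=1..n. x i) \<le> 0" by (intro sum_nonpos) auto
    thus False using x_sum by simp
  qed
  have Cpos: "C > 0" using C_ge by (smt (verit) exp_gt_zero)
  have lnC: "ln C \<ge> 1 / exp 1" using C_ge Cpos
    by (metis exp_gt_zero exp_le_cancel_iff exp_ln)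
  define S where "S = (\<Sum>k=1..n. (1 - x k) * ln (1 - x k))"
  define P where "P = (\<Prod>k=1..n. pow0 (1 - x k) (1 - x k))"
  have PS: "P = exp S" unfolding P_def S_def
    by (simp add: exp_sum pow0_self x_le1)
  have "S = (1 - x m) * ln (1 - x m) + (\<Sum>k\<in>{1..n}-{m}. (1 - x k) * ln (1 - x k))"
    unfolding S_def using m by (simp add: sum.remove)
  also have "\<dots> \<ge> (1 - y) * ln (1 - y) + (\<Sum>k\<in>{1..n}-{m}. - x k)"
    using m x_nonneg x_le1 xlnx_ge by (intro add_mono sum_mono) (auto simp del: minus_le_iff)
  finally have S1: "S \<ge> (1 - y) * ln (1 - y) - (\<Sum>k\<in>{1..n}-{m}. x k)"
    by (simp add: sum_negf)
  have "(\<Sum>k\<in>{1..n}-{m}. x k) = 1 - y" using x_sum m by (simp add: sum_diff1)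
  with S1 have S2: "S \<ge> (1 - y) * ln (1 - y) - (1 - y)" by simp
  define D where "D = C * pow0 (1 - y) (1 - y) / exp (1 - y)"
  have D_eq: "D = C * exp ((1 - y) * ln (1 - y) - (1 - y))"
    unfolding D_def using y1 by (simp add: pow0_self exp_diff)
  have Dpos: "D > 0" using D_eq Cpos by simp
  have CP: "C * P \<ge> D" unfolding D_eq PS using S2 Cpos by simp
  have yD: "y \<le> D"
  proof -
    have a: "ln y + 1 - y \<le> 0" using ln_le_minus_one[OF ypos] by simp
    have b: "(1 - y) * ln (1 - y) \<ge> - 1 / exp 1" using y1 ulnu_ge by simp
    have "ln y \<le> ln C + (1 - y) * ln (1 - y) - (1 - y)" using a b lnC by simp
    hence "exp (ln y) \<le> exp (ln C + (1 - y) * ln (1 - y) - (1 - y))" by simp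
    also have "exp (ln C + (1 - y) * ln (1 - y) - (1 - y)) = C * exp ((1 - y) * ln (1 - y) - (1 - y))"
      using Cpos by (simp add: exp_add exp_diff)
    finally show ?thesis using ypos unfolding D_eq by simp
  qed
  have arg: "y * exp (1 - y) / (C * pow0 (1 - y) (1 - y)) = y / D"
    unfolding D_def by simp
  have yD1: "y / D \<le> 1" using yD Dpos by simp
  have yD0: "y / D \<ge> 0" using ypos Dpos by simp
  have tm: "psi (x j / (C * P)) \<le> x j / y * psi (y / D)" if j: "j \<in> {1..n}" for j
  proof -
    have xj0: "x j \<ge> 0" using x_nonneg j by auto
    have CPpos: "C * P > 0" using CP Dpos by linarith
    have le1: "x j / (C * P) \<le> x j / D"
      using CP Dpos xj0 by (intro divide_left_mono) auto
    have le2: "x j / D \<le> y / D" using xy[OF j] Dpos by (simp add: divide_right_mono)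
    have g0: "x j / (C * P) \<ge> 0" using xj0 CPpos by simp
    have m1: "psi (x j / (C * P)) \<le> psi (x j / D)"
    proof (rule mono_onD[OF psi_mono])
      show "x j / (C * P) \<in> {0..1}" using le1 le2 yD1 g0 by auto
      show "x j / D \<in> {0..1}" using le1 le2 yD1 g0 by auto
    qed (rule le1)
    define t where "t = x j / y"
    have t01: "0 \<le> t" "t \<le> 1" using xj0 ypos xy[OF j] by (auto simp: t_def)
    have eq: "x j / D = (1 - t) * 0 + t * (y / D)" using ypos by (simp add: t_def)
    have "psi ((1 - t) *\<^sub>R 0 + t *\<^sub>R (y / D)) \<le> (1 - t) * psi 0 + t * psi (y / D)"
      using t01 yD0 yD1 by (intro convex_onD[OF psi_convex]) auto
    hence "psi ((1 - t) * 0 + t * (y / D)) \<le> (1 - t) * psi 0 + t * psi (y / D)" by simp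
    thus ?thesis using m1 eq psi_zero by (simp add: t_def)
  qed
  have "(\<Sum>j=1..n. psi (x j / (C * P))) \<le> (\<Sum>j=1..n. x j / y * psi (y / D))"
    using tm by (rule sum_mono)
  also have "\<dots> = (\<Sum>j=1..n. x j) / y * psi (y / D)"
    by (simp add: sum_distrib_right sum_divide_distrib)
  finally show ?thesis using x_sum arg unfolding P_def by simp
qed

end
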